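(* For all positive integers $\ell$ and $n$, $\mathrm{IR}(K_{1,\ell}, K_{1,n}) = n+\ell$.
   Context: All graphs are finite and simple. $K_{1,m}$ denotes the star with $m$ edges. For graphs $F$, $H$, $G$, write $F \overset{\text{ind}}{\longrightarrow} (H,G)$ if for every coloring of the edges of $F$ with red and blue there is either a red induced copy of $H$ (a vertex set $S\subseteq V(F)$ with $F[S]\cong H$ and all edges of $F[S]$ red) or a blue induced copy of $G$ (defined analogously with blue). The induced Ramsey number $\mathrm{IR}(H,G)$ is the smallest number of vertices of a graph $F$ with $F \overset{\text{ind}}{\longrightarrow} (H,G)$. *)

theory Defs
  imports Main
begin

definition simple_graph :: "'a set \<Rightarrow> 'a set set \<Rightarrow> bool" where
  "simple_graph V E \<longleftrightarrow> finite V \<and> (\<forall>e\<in>E. e \<subseteq> V \<and> card e = 2)"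

definition graph_iso :: "'a set \<Rightarrow> 'a set set \<Rightarrow> 'b set \<Rightarrow> 'b set set \<Rightarrow> bool" where
  "graph_iso V1 E1 V2 E2 \<longleftrightarrow>
     (\<exists>f. bij_betw f V1 V2 \<and> (\<forall>x\<in>V1. \<forall>y\<in>V1. ({x, y} \<in> E1 \<longleftrightarrow> {f x, f y} \<in> E2)))"

definition induced_edges :: "'a set set \<Rightarrow> 'a set \<Rightarrow> 'a set set" where
  "induced_edges E S = {e \<in> E. e \<subseteq> S}"

definition star_V :: "nat \<Rightarrow> nat set" where
  "star_V m = {0..m}"

definition star_E :: "nat \<Rightarrow> nat set set" where
  "star_E m = {{0, i} | i. i \<in> {1..m}}"

text \<open>A monochromatic induced copy of (VH,EH) in colour col (True = red, False = blue)
  under the colouring c of the edges of F = (V,E).\<close>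

definition mono_induced_copy ::
  "'a set \<Rightarrow> 'a set set \<Rightarrow> ('a set \<Rightarrow> bool) \<Rightarrow> bool \<Rightarrow> 'b set \<Rightarrow> 'b set set \<Rightarrow> bool" where
  "mono_induced_copy V E c col VH EH \<longleftrightarrow>
     (\<exists>S. S \<subseteq> V \<and> graph_iso S (induced_edges E S) VH EH \<and>
          (\<forall>e\<in>induced_edges E S. c e = col))"

definition ind_arrows ::
  "'a set \<Rightarrow> 'a set set \<Rightarrow> 'b set \<Rightarrow> 'b set set \<Rightarrow> 'c set \<Rightarrow> 'c set set \<Rightarrow> bool" where
  "ind_arrows V E VH EH VG EG \<longleftrightarrow>
     (\<forall>c :: 'a set \<Rightarrow> bool.
        mono_induced_copy V E c True VH EH \<or> mono_induced_copy V E c False VG EG)"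

text \<open>Every finite graph is isomorphic to one on vertex set {0..<N},
  so it suffices to range over such graphs.\<close>

definition IR :: "'b set \<Rightarrow> 'b set set \<Rightarrow> 'c set \<Rightarrow> 'c set set \<Rightarrow> nat" where
  "IR VH EH VG EG = (LEAST N. \<exists>E :: nat set set.
      simple_graph {0..<N} E \<and> ind_arrows {0..<N} E VH EH VG EG)"

end

theory Submission
  imports Defs
begin

definition sstar :: "'a set set \<Rightarrow> ('a set \<Rightarrow> bool) \<Rightarrow> bool \<Rightarrow> 'a set \<Rightarrow> 'a \<Rightarrow> 'a set \<Rightarrow> nat \<Rightarrow> bool" where
  "sstar E c col V u L m \<longleftrightarrow> u \<in> V \<and> L \<subseteq> V - {u} \<and> card L = m \<and>
     (\<forall>x\<in>L. {u,x} \<in> E \<and> c {u,x} = col) \<and> (\<forall>x\<in>L. \<forall>y\<in>L. x \<noteq> y \<longrightarrow> {x,y} \<notin> E)"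

lemma star_E_mem: "{a,b} \<in> star_E m \<longleftrightarrow> (a = 0 \<and> b \<in> {1..m}) \<or> (b = 0 \<and> a \<in> {1..m})"
  unfolding star_E_def by (auto simp: doubleton_eq_iff)

lemma star_E_single: "{a} \<notin> star_E m"
  using star_E_mem[of a a m] by simp

lemma copy_to_star:
  assumes "mono_induced_copy V E c col (star_V m) (star_E m)"
  shows "\<exists>u L. sstar E c col V u L m"
proof -
  obtain S f where S: "S \<subseteq> V" and bij: "bij_betw f S {0..m}"
    and iso: "\<forall>x\<in>S. \<forall>y\<in>S. ({x, y} \<in> induced_edges E S \<longleftrightarrow> {f x, f y} \<in> star_E m)"
    and cl: "\<forall>e\<in>induced_edges E S. c e = col"
    using assms unfolding mono_induced_copy_def graph_iso_def star_V_def by blast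
  define g where "g = inv_into S f"
  have bg: "bij_betw g {0..m} S" unfolding g_def by (rule bij_betw_inv_into[OF bij])
  have fg: "f (g i) = i" if "i \<in> {0..m}" for i
    unfolding g_def using bij that unfolding bij_betw_def by (simp add: f_inv_into_f)
  have gS: "g i \<in> S" if "i \<in> {0..m}" for i using bij_betw_apply[OF bg that] .
  have ginj: "inj_on g {0..m}" using bij_betw_imp_inj_on[OF bg] .
  let ?u = "g 0" and ?L = "g ` {1..m}"
  have "sstar E c col V ?u ?L m"
    unfolding sstar_def
  proof (intro conjI ballI impI)
    show "?u \<in> V" using gS S by auto
    show "?L \<subseteq> V - {?u}"
    proof
      fix x assume "x \<in> ?L"
      then obtain i where i: "i \<in> {1..m}" "x = g i" by auto
      have "g i \<noteq> g 0" using ginj i(1) by (metis atLeastAtMost_iff inj_on_eq_iff le0 not_one_le_zero)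
      then show "x \<in> V - {?u}" using i gS S by auto
    qed
    show "card ?L = m" using card_image[OF inj_on_subset[OF ginj]] by auto
  next
    fix x assume "x \<in> ?L"
    then obtain i where i: "i \<in> {1..m}" "x = g i" by auto
    have "{f ?u, f x} \<in> star_E m" using i fg by (auto simp: star_E_mem)
    then have "{?u, x} \<in> induced_edges E S" using iso gS i by auto
    then show "{?u, x} \<in> E" "c {?u, x} = col" using cl unfolding induced_edges_def by auto
  next
    fix x y assume "x \<in> ?L" "y \<in> ?L" "x \<noteq> y"
    then obtain i j where i: "i \<in> {1..m}" "x = g i" and j: "j \<in> {1..m}" "y = g j" by auto
    have "{f x, f y} \<notin> star_E m" using i j fg by (auto simp: star_E_mem)
    then have "{x, y} \<notin> induced_edges E S" using iso gS i j by auto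
    moreover have "{x,y} \<subseteq> S" using gS i j by auto
    ultimately show "{x, y} \<notin> E" unfolding induced_edges_def by auto
  qed
  then show ?thesis by blast
qed

lemma star_to_copy:
  assumes fin: "finite V" and E2: "\<forall>e\<in>E. card e = 2" and st: "sstar E c col V u L m"
  shows "mono_induced_copy V E c col (star_V m) (star_E m)"
proof -
  have st': "u \<in> V \<and> L \<subseteq> V - {u} \<and> card L = m \<and>
     (\<forall>x\<in>L. {u,x} \<in> E \<and> c {u,x} = col) \<and> (\<forall>x\<in>L. \<forall>y\<in>L. x \<noteq> y \<longrightarrow> {x,y} \<notin> E)"
    using st unfolding sstar_def .
  then have u: "u \<in> V" and L: "L \<subseteq> V - {u}" and cL: "card L = m"
    and ed: "\<forall>x\<in>L. {u,x} \<in> E \<and> c {u,x} = col"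
    and ind: "\<forall>x\<in>L. \<forall>y\<in>L. x \<noteq> y \<longrightarrow> {x,y} \<notin> E"
    by auto
  have finL: "finite L" using L fin finite_subset by blast
  obtain h where h: "bij_betw h L {0..<m}" using ex_bij_betw_finite_nat[OF finL] cL by blast
  define S where "S = insert u L"
  define f where "f x = (if x = u then 0 else Suc (h x))" for x
  have hL: "h x < m" if "x \<in> L" for x using bij_betw_apply[OF h that] by simp
  have uL: "u \<notin> L" using L by auto
  have bf: "bij_betw f S {0..m}"
  proof (rule bij_betw_imageI)
    show "inj_on f S"
    proof (rule inj_onI)
      fix x y assume "x \<in> S" "y \<in> S" "f x = f y"
      moreover have hinj: "inj_on h L" using h bij_betw_def by blast
      ultimately show "x = y" unfolding S_def
        by (cases "x = u"; cases "y = u") (auto simp: f_def dest: inj_onD[OF hinj])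
    qed
    show "f ` S = {0..m}"
    proof
      show "f ` S \<subseteq> {0..m}" using hL unfolding S_def f_def by (force simp: Suc_le_eq)
      show "{0..m} \<subseteq> f ` S"
      proof
        fix i assume i: "i \<in> {0..m}"
        show "i \<in> f ` S"
        proof (cases i)
          case 0 then show ?thesis unfolding S_def f_def by auto
        next
          case (Suc k)
          then have "k \<in> h ` L" using h i bij_betw_imp_surj_on by fastforce
          then obtain x where "x \<in> L" "h x = k" by auto
          then show ?thesis using Suc uL unfolding S_def f_def by (auto intro!: image_eqI[of _ _ x])
        qed
      qed
    qed
  qed
  have E1: "{x} \<notin> E" for x
  proof
    assume "{x} \<in> E"
    then have "card {x} = 2" using E2 by blast
    then show False by simp
  qed
  have iso: "\<forall>x\<in>S. \<forall>y\<in>S. ({x, y} \<in> induced_edges E S \<longleftrightarrow> {f x, f y} \<in> star_E m)"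
  proof (intro ballI)
    fix x y assume x: "x \<in> S" and y: "y \<in> S"
    have "{x,y} \<in> induced_edges E S \<longleftrightarrow> {x,y} \<in> E" using x y unfolding induced_edges_def by auto
    also have "\<dots> \<longleftrightarrow> {f x, f y} \<in> star_E m"
    proof (cases "x = u")
      case True
      then show ?thesis
      proof (cases "y = u")
        case True
        then show ?thesis using \<open>x = u\<close> E1[of u] by (simp add: f_def star_E_single)
      next
        case False
        then have "y \<in> L" using y S_def by auto
        then show ?thesis using \<open>x = u\<close> False ed hL[of y] by (simp add: f_def star_E_mem Suc_le_eq)
      qed
    next
      case False
      then have xL: "x \<in> L" using x S_def by auto
      show ?thesis
      proof (cases "y = u")
        case True
        have e1: "{x,y} = {u,x}" using True by auto
        have e2: "{f x, f y} = {f u, f x}" using True by auto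
        show ?thesis unfolding e1 e2 using False xL ed hL[of x] by (simp add: f_def star_E_mem Suc_le_eq)
      next
        case yu: False
        then have "y \<in> L" using y S_def by auto
        then show ?thesis using False yu xL ind E1[of x] by (cases "x = y") (simp_all add: f_def star_E_mem star_E_single)
      qed
    qed
    finally show "{x, y} \<in> induced_edges E S \<longleftrightarrow> {f x, f y} \<in> star_E m" .
  qed
  have cl: "\<forall>e\<in>induced_edges E S. c e = col"
  proof
    fix e assume e: "e \<in> induced_edges E S"
    then have "card e = 2" "e \<subseteq> S" "e \<in> E" using E2 unfolding induced_edges_def by auto
    then obtain a b where ab: "e = {a,b}" "a \<noteq> b" "a \<in> S" "b \<in> S" by (auto simp: card_2_iff)
    show "c e = col"
    proof -
      consider "a = u" "b \<in> L" | "b = u" "a \<in> L" | "a \<in> L" "b \<in> L" using ab S_def by auto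
      then show ?thesis
      proof cases
        case 1 then show ?thesis using ab ed by auto
      next
        case 2 then show ?thesis using ab ed by (auto simp: insert_commute)
      next
        case 3 then show ?thesis using ab ind \<open>e \<in> E\<close> by auto
      qed
    qed
  qed
  have "S \<subseteq> V" using u L unfolding S_def by auto
  then show ?thesis unfolding mono_induced_copy_def graph_iso_def star_V_def
    using bf iso cl by blast
qed


definition indep :: "'a set set \<Rightarrow> 'a set \<Rightarrow> bool" where
  "indep E I \<longleftrightarrow> (\<forall>x\<in>I. \<forall>y\<in>I. x \<noteq> y \<longrightarrow> {x,y} \<notin> E)"

lemma good_vertex:
  assumes fin: "finite V" and ne: "V \<noteq> {}"
  shows "\<exists>v\<in>V. \<forall>L. L \<subseteq> V - {v} \<and> (\<forall>x\<in>L. {v,x} \<in> E) \<and> indep E L \<longrightarrow> 2 * card L \<le> card V"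
proof -
  define IS where "IS = {I. I \<subseteq> V \<and> indep E I}"
  have finIS: "finite IS" unfolding IS_def using fin by simp
  obtain w where w: "w \<in> V" using ne by blast
  have wIS: "{w} \<in> IS" unfolding IS_def indep_def using w by auto
  define k where "k = Max (card ` IS)"
  have "k \<in> card ` IS" unfolding k_def using finIS wIS by (intro Max_in) auto
  then obtain I where I: "I \<in> IS" "card I = k" by auto
  have maxI: "card J \<le> card I" if "J \<in> IS" for J
    unfolding I(2) k_def using finIS that by (intro Max_ge) auto
  have "1 \<le> card I" using maxI[OF wIS] by simp
  then have "I \<noteq> {}" by auto
  then obtain v where v: "v \<in> I" by blast
  have IV: "I \<subseteq> V" and indI: "indep E I" using I(1) unfolding IS_def by auto
  show ?thesis
  proof (intro bexI[of _ v] allI impI)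
    show "v \<in> V" using v IV by auto
    fix L assume L: "L \<subseteq> V - {v} \<and> (\<forall>x\<in>L. {v,x} \<in> E) \<and> indep E L"
    have "L \<in> IS" using L unfolding IS_def by auto
    then have c1: "card L \<le> card I" by (rule maxI)
    have disj: "L \<inter> I = {}"
    proof (rule ccontr)
      assume "L \<inter> I \<noteq> {}"
      then obtain x where x: "x \<in> L" "x \<in> I" by blast
      then have "x \<noteq> v" "{v,x} \<in> E" using L by auto
      then show False using indI v x unfolding indep_def by auto
    qed
    have "card (L \<union> I) = card L + card I"
      using disj fin L IV by (intro card_Un_disjoint) (auto intro: finite_subset)
    moreover have "card (L \<union> I) \<le> card V" using fin L IV by (intro card_mono) auto
    ultimately show "2 * card L \<le> card V" using c1 by simp
  qed
qed

lemma colouring: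
  assumes "finite V" "card V < n + l" "1 \<le> l" "1 \<le> n"
  shows "\<exists>c. (\<forall>u L. \<not> sstar E c True V u L l) \<and> (\<forall>u L. \<not> sstar E c False V u L n)"
  using assms
proof (induction "card V" arbitrary: V l n rule: less_induct)
  case less
  consider "l = 1" | "n = 1" | "2 \<le> l" "2 \<le> n" using less.prems by linarith
  then show ?case
  proof cases
    case 1
    have "\<not> sstar E (\<lambda>_. False) True V u L l" for u L
    proof
      assume "sstar E (\<lambda>_. False) True V u L l"
      then have "card L = 1" "\<forall>x\<in>L. (False::bool) = True" using 1 unfolding sstar_def by auto
      then show False by (auto simp: card_Suc_eq)
    qed
    moreover have "\<not> sstar E (\<lambda>_. False) False V u L n" for u L
    proof
      assume "sstar E (\<lambda>_. False) False V u L n"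
      then have "u \<in> V" "L \<subseteq> V - {u}" "card L = n" unfolding sstar_def by auto
      moreover then have "card L \<le> card (V - {u})" using less.prems(1) by (intro card_mono) auto
      ultimately show False using less.prems 1 by simp
    qed
    ultimately show ?thesis by blast
  next
    case 2
    have "\<not> sstar E (\<lambda>_. True) False V u L n" for u L
    proof
      assume "sstar E (\<lambda>_. True) False V u L n"
      then have "card L = 1" "\<forall>x\<in>L. (True::bool) = False" using 2 unfolding sstar_def by auto
      then show False by (auto simp: card_Suc_eq)
    qed
    moreover have "\<not> sstar E (\<lambda>_. True) True V u L l" for u L
    proof
      assume "sstar E (\<lambda>_. True) True V u L l"
      then have "u \<in> V" "L \<subseteq> V - {u}" "card L = l" unfolding sstar_def by auto
      moreover then have "card L \<le> card (V - {u})" using less.prems(1) by (intro card_mono) auto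
      ultimately show False using less.prems 2 by simp
    qed
    ultimately show ?thesis by blast
  next
    case 3
    show ?thesis
    proof (cases "V = {}")
      case True
      then show ?thesis unfolding sstar_def by auto
    next
      case False
      obtain v where v: "v \<in> V" and gv: "\<And>L. L \<subseteq> V - {v} \<and> (\<forall>x\<in>L. {v,x} \<in> E) \<and> indep E L \<Longrightarrow> 2 * card L \<le> card V"
        using good_vertex[OF less.prems(1) False, of E] by blast
      define V' where "V' = V - {v}"
      have finV': "finite V'" using less.prems(1) V'_def by auto
      have cV': "card V' < card V" unfolding V'_def using less.prems(1) v by (intro card_Diff1_less)
      have cV'': "card V' = card V - 1" unfolding V'_def using v by simp
      show ?thesis
      proof (cases "l \<le> n")
        case True
        have "\<exists>c. (\<forall>u L. \<not> sstar E c True V' u L l) \<and> (\<forall>u L. \<not> sstar E c False V' u L (n - 1))"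
          using less.prems 3 cV'' by (intro less.hyps[OF cV' finV']) auto
        then obtain c where cr: "\<forall>u L. \<not> sstar E c True V' u L l" and cb: "\<forall>u L. \<not> sstar E c False V' u L (n - 1)"
          by blast
        define c' where "c' e = (if v \<in> e then False else c e)" for e
        have "\<not> sstar E c' True V u L l" for u L
        proof
          assume st: "sstar E c' True V u L l"
          then have "L \<noteq> {}" using 3 unfolding sstar_def by auto
          then obtain x where "x \<in> L" by blast
          then have uv: "u \<noteq> v" using st unfolding sstar_def c'_def by auto
          have vL: "v \<notin> L"
          proof
            assume "v \<in> L" then show False using st unfolding sstar_def c'_def by auto
          qed
          have "sstar E c True V' u L l"
            using st uv vL unfolding sstar_def c'_def V'_def by (auto, metis)
          then show False using cr by blast
        qed
        moreover have "\<not> sstar E c' False V u L n" for u L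
        proof
          assume st: "sstar E c' False V u L n"
          show False
          proof (cases "u = v")
            case True
            then have "L \<subseteq> V - {v} \<and> (\<forall>x\<in>L. {v,x} \<in> E) \<and> indep E L" "card L = n"
              using st unfolding sstar_def indep_def by auto
            then have "2 * n \<le> card V" using gv by fastforce
            then show False using less.prems True \<open>l \<le> n\<close> by linarith
          next
            case uv: False
            have "n - 1 \<le> card (L - {v})" using st unfolding sstar_def
              by (metis card_Diff_singleton_if diff_le_self le_refl)
            then obtain L' where L': "L' \<subseteq> L - {v}" "card L' = n - 1"
              by (meson obtain_subset_with_card_n)
            have "sstar E c False V' u L' (n - 1)"
              using st uv L' unfolding sstar_def c'_def V'_def
              by (auto simp: subset_iff; metis)
            then show False using cb by blast
          qed
        qed
        ultimately show ?thesis by blast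
      next
        case False
        have "\<exists>c. (\<forall>u L. \<not> sstar E c True V' u L (l - 1)) \<and> (\<forall>u L. \<not> sstar E c False V' u L n)"
          using less.prems 3 cV'' by (intro less.hyps[OF cV' finV']) auto
        then obtain c where cr: "\<forall>u L. \<not> sstar E c True V' u L (l - 1)" and cb: "\<forall>u L. \<not> sstar E c False V' u L n"
          by blast
        define c' where "c' e = (if v \<in> e then True else c e)" for e
        have "\<not> sstar E c' False V u L n" for u L
        proof
          assume st: "sstar E c' False V u L n"
          then have "L \<noteq> {}" using 3 unfolding sstar_def by auto
          then obtain x where "x \<in> L" by blast
          then have uv: "u \<noteq> v" using st unfolding sstar_def c'_def by auto
          have vL: "v \<notin> L"
          proof
            assume "v \<in> L" then show False using st unfolding sstar_def c'_def by auto
          qed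
          have "sstar E c False V' u L n"
            using st uv vL unfolding sstar_def c'_def V'_def by (auto, metis)
          then show False using cb by blast
        qed
        moreover have "\<not> sstar E c' True V u L l" for u L
        proof
          assume st: "sstar E c' True V u L l"
          show False
          proof (cases "u = v")
            case True
            then have "L \<subseteq> V - {v} \<and> (\<forall>x\<in>L. {v,x} \<in> E) \<and> indep E L" "card L = l"
              using st unfolding sstar_def indep_def by auto
            then have "2 * l \<le> card V" using gv by fastforce
            then show False using less.prems True \<open>\<not> l \<le> n\<close> by linarith
          next
            case uv: False
            have "l - 1 \<le> card (L - {v})" using st unfolding sstar_def
              by (metis card_Diff_singleton_if diff_le_self le_refl)
            then obtain L' where L': "L' \<subseteq> L - {v}" "card L' = l - 1"
              by (meson obtain_subset_with_card_n)
            have "sstar E c True V' u L' (l - 1)"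
              using st uv L' unfolding sstar_def c'_def V'_def
              by (auto simp: subset_iff; metis)
            then show False using cr by blast
          qed
        qed
        ultimately show ?thesis by blast
      qed
    qed
  qed
qed


lemma upper:
  fixes l n :: nat
  assumes "l \<ge> 1" and "n \<ge> 1"
  shows "simple_graph {0..<n+l} (star_E (n + l - 1)) \<and>
    ind_arrows {0..<n+l} (star_E (n + l - 1)) (star_V l) (star_E l) (star_V n) (star_E n)"
proof
  let ?V = "{0..<n+l}" and ?E = "star_E (n + l - 1)"
  have E2: "\<forall>e\<in>?E. card e = 2" unfolding star_E_def by auto
  show "simple_graph ?V ?E" unfolding simple_graph_def using E2 unfolding star_E_def by auto
  have indE: "\<forall>x\<in>L. \<forall>y\<in>L. x \<noteq> y \<longrightarrow> {x,y} \<notin> ?E" if "L \<subseteq> {1..n+l-1}" for L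
    using that by (auto simp: star_E_mem)
  show "ind_arrows ?V ?E (star_V l) (star_E l) (star_V n) (star_E n)"
    unfolding ind_arrows_def
  proof
    fix c :: "nat set \<Rightarrow> bool"
    define R where "R = {i\<in>{1..n+l-1}. c {0,i}}"
    define B where "B = {i\<in>{1..n+l-1}. \<not> c {0,i}}"
    have "card R + card B = card (R \<union> B)"
      unfolding R_def B_def by (intro card_Un_disjoint[symmetric]) auto
    also have "R \<union> B = {1..n+l-1}" unfolding R_def B_def by auto
    finally have cRB: "card R + card B = n + l - 1" by simp
    show "mono_induced_copy ?V ?E c True (star_V l) (star_E l) \<or>
          mono_induced_copy ?V ?E c False (star_V n) (star_E n)"
    proof (cases "l \<le> card R")
      case True
      then obtain L where L: "L \<subseteq> R" "card L = l" by (meson obtain_subset_with_card_n)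
      have "sstar ?E c True ?V 0 L l"
        unfolding sstar_def
      proof (intro conjI)
        show "0 \<in> ?V" using assms by simp
        show "L \<subseteq> ?V - {0}" using L(1) unfolding R_def by auto
        show "card L = l" by fact
        show "\<forall>x\<in>L. {0, x} \<in> ?E \<and> c {0, x} = True" using L(1) unfolding R_def by (auto simp: star_E_mem)
        show "\<forall>x\<in>L. \<forall>y\<in>L. x \<noteq> y \<longrightarrow> {x, y} \<notin> ?E" using indE L(1) unfolding R_def by blast
      qed
      then show ?thesis using star_to_copy[OF _ E2] by blast
    next
      case False
      then have "n \<le> card B" using cRB by linarith
      then obtain L where L: "L \<subseteq> B" "card L = n" by (meson obtain_subset_with_card_n)
      have "sstar ?E c False ?V 0 L n"
        unfolding sstar_def
      proof (intro conjI)
        show "0 \<in> ?V" using assms by simp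
        show "L \<subseteq> ?V - {0}" using L(1) unfolding B_def by auto
        show "card L = n" by fact
        show "\<forall>x\<in>L. {0, x} \<in> ?E \<and> c {0, x} = False" using L(1) unfolding B_def by (auto simp: star_E_mem)
        show "\<forall>x\<in>L. \<forall>y\<in>L. x \<noteq> y \<longrightarrow> {x, y} \<notin> ?E" using indE L(1) unfolding B_def by blast
      qed
      then show ?thesis using star_to_copy[OF _ E2] by blast
    qed
  qed
qed

theorem lemma1:
  fixes l n :: nat
  assumes "l \<ge> 1" and "n \<ge> 1"
  shows "IR (star_V l) (star_E l) (star_V n) (star_E n) = n + l"
  unfolding IR_def
proof (rule Least_equality)
  show "\<exists>E :: nat set set. simple_graph {0..<n+l} E \<and> ind_arrows {0..<n+l} E (star_V l) (star_E l) (star_V n) (star_E n)"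
    using upper[OF assms] by blast
next
  fix N
  assume "\<exists>E :: nat set set. simple_graph {0..<N} E \<and> ind_arrows {0..<N} E (star_V l) (star_E l) (star_V n) (star_E n)"
  then obtain E :: "nat set set" where ar: "ind_arrows {0..<N} E (star_V l) (star_E l) (star_V n) (star_E n)" by blast
  show "n + l \<le> N"
  proof (rule ccontr)
    assume "\<not> n + l \<le> N"
    then have "card {0..<N} < n + l" by simp
    then obtain c where c1: "\<forall>u L. \<not> sstar E c True {0..<N} u L l" and c2: "\<forall>u L. \<not> sstar E c False {0..<N} u L n"
      using colouring[of "{0..<N}" n l E] assms by auto
    from ar have "mono_induced_copy {0..<N} E c True (star_V l) (star_E l) \<or>
        mono_induced_copy {0..<N} E c False (star_V n) (star_E n)"
      unfolding ind_arrows_def by blast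
    then show False using copy_to_star c1 c2 by blast
  qed
qed

end
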